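(* Let $k_1,k_2$ be positive integers with $k_1\le k_2$ and $k_1+k_2\ge 4$, and let $m$ be a positive integer such that there exists a perfect $B[-k_1,k_2](m)$ set. Suppose $p$ is a prime and $a>0$ an integer with $p\mid m$ and $a\mid p-1$. If $p\mid a(k_1+k_2)+1$ and $\lfloor k_1/p\rfloor+\lfloor k_2/p\rfloor=\lfloor (k_1+k_2)/p\rfloor$, then $a(k_1+k_2)+1\mid m$.
   Context: For a positive integer $q$, $\mathbb{Z}_q$ is the ring of integers modulo $q$. For integers $a\le b$, $[a,b]^\ast=\{a,a+1,\dots,b\}\setminus\{0\}$. For non-negative integers $0\le k_1\le k_2$ and a positive integer $q$, a set $B\subseteq\mathbb{Z}_q$ is a $B[-k_1,k_2](q)$ set (splitter set) if, for each $b\in B$, the set $\{ab \bmod q: a\in[-k_1,k_2]^\ast\}$ consists of $k_1+k_2$ distinct nonzero elements, and these sets are pairwise disjoint for distinct $b\in B$. Such a set is perfect if $|B|=(q-1)/(k_1+k_2)$; equivalently, every nonzero element of $\mathbb{Z}_q$ has a unique representation $ab$ with $a\in[-k_1,k_2]^\ast$, $b\in B$ (and $0$ has no such representation). *)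

theory Defs
  imports Complex_Main "HOL-Computational_Algebra.Primes"
begin

text \<open>Elements of Z_q are represented by integers in {0..<q}.
  The multiplier set [-k1,k2]* = {-k1..k2} minus {0}.\<close>

definition mult_range :: "nat \<Rightarrow> nat \<Rightarrow> int set" where
  "mult_range k1 k2 = {- int k1 .. int k2} - {0}"

definition splitter_row :: "nat \<Rightarrow> nat \<Rightarrow> nat \<Rightarrow> int \<Rightarrow> int set" where
  "splitter_row k1 k2 q b = (\<lambda>a. (a * b) mod int q) ` mult_range k1 k2"

definition splitter_set :: "nat \<Rightarrow> nat \<Rightarrow> nat \<Rightarrow> int set \<Rightarrow> bool" where
  "splitter_set k1 k2 q B \<longleftrightarrow>
     B \<subseteq> {0 ..< int q} \<and>
     (\<forall>b\<in>B. card (splitter_row k1 k2 q b) = k1 + k2 \<and> 0 \<notin> splitter_row k1 k2 q b) \<and>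
     (\<forall>b\<in>B. \<forall>b'\<in>B. b \<noteq> b' \<longrightarrow> splitter_row k1 k2 q b \<inter> splitter_row k1 k2 q b' = {})"

definition perfect_splitter_set :: "nat \<Rightarrow> nat \<Rightarrow> nat \<Rightarrow> int set \<Rightarrow> bool" where
  "perfect_splitter_set k1 k2 q B \<longleftrightarrow>
     splitter_set k1 k2 q B \<and> real (card B) = (real q - 1) / real (k1 + k2)"

end

theory Submission
  imports Defs
begin

lemma arith_key:
  fixes k a p t :: nat
  assumes "a * k + 1 = p * t" "a dvd p - 1" "prime p" "0 < a"
  shows "a * (k - k div p) = t * (p - 1)"
proof -
  obtain c where c: "p - 1 = a * c" using assms(2) by (auto elim: dvdE)
  have p: "p = a * c + 1" using c prime_gt_1_nat[OF assms(3)] by simp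
  have "(p*t) mod a = (a*(c*t) + t) mod a" using p by (simp add: algebra_simps)
  also have "\<dots> = t mod a" by simp
  finally have "(a*k+1) mod a = t mod a" using assms(1) by simp
  moreover have "(a*k+1) mod a = 1 mod a"
    using mod_mult_self2[of 1 a k] by (simp only: add.commute[of "a*k" 1])
  ultimately have m1: "t mod a = 1 mod a" by simp
  have t1: "t \<ge> 1" using assms(1) by (cases t) auto
  obtain s where s: "t = a * s + 1"
  proof (cases "a = 1")
    case True thus ?thesis using t1 that[of "t - 1"] by simp
  next
    case False
    with m1 assms(4) have "t mod a = 1" by simp
    hence "t = a * (t div a) + 1" using div_mult_mod_eq[of t a] by (simp add: mult.commute)
    thus ?thesis by (rule that)
  qed
  have "a * k + 1 = (a*c+1)*(a*s+1)" using assms(1) p s by simp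
  hence "a * k = a * (a*c*s + c + s)" by (simp add: algebra_simps)
  hence k: "k = a*c*s + c + s" using assms(4) by simp
  have "k = s * p + c" using k p by (simp add: algebra_simps)
  moreover have "c < p" proof -
    have "c \<le> a*c" using assms(4) by simp
    thus ?thesis using p by linarith
  qed
  ultimately have "k div p = s" using assms(3) by simp
  thus ?thesis using k s c by (simp add: algebra_simps)
qed

lemma card_nondvd:
  fixes K p :: nat
  assumes "p > 0"
  shows "card {x\<in>{1..K}. \<not> p dvd x} = K - K div p"
proof -
  have eq: "{x\<in>{1..K}. p dvd x} = (\<lambda>j. p*j) ` {1..K div p}"
  proof (rule set_eqI, rule iffI)
    fix x assume x: "x \<in> {x\<in>{1..K}. p dvd x}"
    then obtain j where j: "x = p*j" by (auto elim: dvdE)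
    have "1 \<le> j" using x j by (cases j) auto
    moreover have "j * p \<le> K" using x j by (simp add: mult.commute)
    hence "j \<le> K div p" using assms by (simp add: less_eq_div_iff_mult_less_eq)
    ultimately have "j \<in> {1..K div p}" by simp
    thus "x \<in> (\<lambda>j. p*j) ` {1..K div p}" using j by (rule rev_image_eqI)
  next
    fix x assume "x \<in> (\<lambda>j. p*j) ` {1..K div p}"
    then obtain j where j: "j \<in> {1..K div p}" "x = p*j" by blast
    have "j * p \<le> K" using j(1) assms by (simp add: less_eq_div_iff_mult_less_eq)
    moreover have "1 \<le> p * j" using j(1) assms by simp
    ultimately show "x \<in> {x\<in>{1..K}. p dvd x}" using j(2) by (simp add: mult.commute)
  qed
  have inj: "inj_on (\<lambda>j. p*j) {1..K div p}" using assms by (simp add: inj_on_def)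
  have c: "card {x\<in>{1..K}. p dvd x} = K div p"
    unfolding eq card_image[OF inj] by simp
  have fin: "finite {x\<in>{1..K}. p dvd x}" by simp
  have e2: "{x\<in>{1..K}. \<not> p dvd x} = {1..K} - {x\<in>{1..K}. p dvd x}" by blast
  have "card ({1..K} - {x\<in>{1..K}. p dvd x}) = card {1..K} - card {x\<in>{1..K}. p dvd x}"
    by (rule card_Diff_subset[OF fin]) blast
  hence "card {x\<in>{1..K}. \<not> p dvd x} = card {1..K} - card {x\<in>{1..K}. p dvd x}"
    by (simp only: e2)
  thus ?thesis using c by simp
qed

lemma card_R: "card (mult_range k1 k2) = k1 + k2"
proof -
  have "card (mult_range k1 k2) = card {- int k1 .. int k2} - 1"
    unfolding mult_range_def by (subst card_Diff_singleton) auto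
  thus ?thesis by simp
qed

lemma card_S:
  assumes "p > 0"
  shows "card {x \<in> mult_range k1 k2. \<not> int p dvd x} = (k1 - k1 div p) + (k2 - k2 div p)"
proof -
  define A where "A K = {x\<in>{1..K}. \<not> p dvd x}" for K
  have eq: "{x \<in> mult_range k1 k2. \<not> int p dvd x} = (\<lambda>x. - int x) ` A k1 \<union> int ` A k2"
  proof safe
    fix x assume x: "x \<in> mult_range k1 k2" "\<not> int p dvd x" "x \<notin> int ` A k2"
    show "x \<in> (\<lambda>x. - int x) ` A k1"
    proof (cases "x > 0")
      case True
      have xe: "x = int (nat x)" using True by simp
      have "\<not> p dvd nat x" using x(2) xe by (metis int_dvd_int_iff)
      moreover have "nat x \<le> k2" using x(1) unfolding mult_range_def by auto
      ultimately have "nat x \<in> A k2" using True unfolding A_def by auto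
      moreover have "x = int (nat x)" using True by simp
      ultimately have "x \<in> int ` A k2" by blast
      thus ?thesis using x(3) by blast
    next
      case False
      have xe: "-x = int (nat (-x))" using False by simp
      have "\<not> p dvd nat (-x)" using x(2) xe by (metis int_dvd_int_iff dvd_minus_iff)
      moreover have "nat (-x) \<le> k1" "x \<noteq> 0" using x(1) unfolding mult_range_def by auto
      ultimately have "nat (-x) \<in> A k1" using False unfolding A_def by auto
      moreover have "x = - int (nat (-x))" using False by simp
      ultimately show ?thesis by blast
    qed
  next
    fix y assume "y \<in> A k1"
    thus "- int y \<in> mult_range k1 k2" "int p dvd - int y \<Longrightarrow> False"
      unfolding A_def mult_range_def by auto
  next
    fix y assume "y \<in> A k2"
    thus "int y \<in> mult_range k1 k2" "int p dvd int y \<Longrightarrow> False"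
      unfolding A_def mult_range_def by auto
  qed
  have d: "(\<lambda>x. - int x) ` A k1 \<inter> int ` A k2 = {}" unfolding A_def by auto
  have "card {x \<in> mult_range k1 k2. \<not> int p dvd x} = card ((\<lambda>x. - int x) ` A k1) + card (int ` A k2)"
    unfolding eq by (rule card_Un_disjoint) (use d in \<open>auto simp: A_def\<close>)
  also have "\<dots> = card (A k1) + card (A k2)"
    by (simp add: card_image inj_on_def)
  finally show ?thesis using card_nondvd[OF assms] unfolding A_def by simp
qed

lemma card_T:
  assumes "p > 0" "m = p * n"
  shows "card {y \<in> {0..<int m}. \<not> int p dvd y} = m - n"
proof -
  have eq: "{y \<in> {0..<int m}. int p dvd y} = (\<lambda>j. int p * j) ` {0..<int n}"
  proof safe
    fix y assume y: "y \<in> {0..<int m}" "int p dvd y"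
    then obtain j where j: "y = int p * j" by (auto elim: dvdE)
    have "0 \<le> j" using y j assms by (simp add: zero_le_mult_iff)
    moreover have "j < int n" using y j assms by (simp add: mult_less_cancel_left)
    ultimately show "y \<in> (\<lambda>j. int p * j) ` {0..<int n}" using j by auto
  next
    fix j assume "j \<in> {0..<int n}"
    thus "int p * j \<in> {0..<int m}" using assms by (auto simp: mult_less_cancel_left)
  qed auto
  have c: "card {y \<in> {0..<int m}. int p dvd y} = n"
    unfolding eq using assms by (subst card_image) (auto simp: inj_on_def)
  have fin: "finite {y \<in> {0..<int m}. int p dvd y}"
    by (rule finite_subset[of _ "{0..<int m}"]) auto
  have e2: "{y \<in> {0..<int m}. \<not> int p dvd y} = {0..<int m} - {y \<in> {0..<int m}. int p dvd y}" by blast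
  have "card ({0..<int m} - {y \<in> {0..<int m}. int p dvd y}) = card {0..<int m} - card {y \<in> {0..<int m}. int p dvd y}"
    by (rule card_Diff_subset[OF fin]) blast
  hence "card {y \<in> {0..<int m}. \<not> int p dvd y} = card {0..<int m} - card {y \<in> {0..<int m}. int p dvd y}"
    by (simp only: e2)
  thus ?thesis using c by simp
qed

theorem corollary3p5:
  fixes k1 k2 m p a :: nat
  assumes "0 < k1" "k1 \<le> k2" "k1 + k2 \<ge> 4"
    and "0 < m"
    and "\<exists>B. perfect_splitter_set k1 k2 m B"
    and "prime p" and "0 < a" and "p dvd m" and "a dvd p - 1"
    and "p dvd a * (k1 + k2) + 1"
    and "k1 div p + k2 div p = (k1 + k2) div p"
  shows "a * (k1 + k2) + 1 dvd m"
proof -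
  define k where "k = k1 + k2"
  have k0: "k > 0" using assms(3) k_def by linarith
  have p0: "p > 0" using assms(6) prime_gt_0_nat by blast
  obtain B where B: "perfect_splitter_set k1 k2 m B" using assms(5) by blast
  define R where "R = mult_range k1 k2"
  define row where "row b = splitter_row k1 k2 m b" for b
  have Bsub: "B \<subseteq> {0..<int m}" and rowk: "\<And>b. b \<in> B \<Longrightarrow> card (row b) = k"
    and row0: "\<And>b. b \<in> B \<Longrightarrow> 0 \<notin> row b"
    and disj: "\<And>b b'. b \<in> B \<Longrightarrow> b' \<in> B \<Longrightarrow> b \<noteq> b' \<Longrightarrow> row b \<inter> row b' = {}"
    using B unfolding perfect_splitter_set_def splitter_set_def row_def k_def by auto
  have "real (card B) = (real m - 1) / real k" using B unfolding perfect_splitter_set_def k_def by simp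
  hence "real (card B) * real k = real m - 1" using k0 by (simp add: field_simps)
  hence "real (card B * k) = real (m - 1)" using assms(4) by (simp add: of_nat_diff)
  hence cardB: "card B * k = m - 1" by (simp only: of_nat_eq_iff)
  have finB: "finite B" using Bsub finite_subset by blast
  have finR: "finite R" unfolding R_def mult_range_def by simp
  have rowdef: "row b = (\<lambda>x. (x*b) mod int m) ` R" for b
    unfolding row_def R_def splitter_row_def by simp
  have inj: "inj_on (\<lambda>x. (x*b) mod int m) R" if "b \<in> B" for b
    using eq_card_imp_inj_on[OF finR] rowk[OF that] card_R[of k1 k2]
    unfolding rowdef R_def k_def by simp
  define U where "U = (\<Union>b\<in>B. row b)"
  have Usub: "U \<subseteq> {1..<int m}"
  proof
    fix y assume "y \<in> U"
    then obtain b where b: "b \<in> B" "y \<in> row b" unfolding U_def by blast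
    have "y \<noteq> 0" using row0[OF b(1)] b(2) by auto
    moreover have "0 \<le> y \<and> y < int m" using b(2) assms(4) unfolding rowdef by auto
    ultimately show "y \<in> {1..<int m}" by auto
  qed
  have "card U = (\<Sum>b\<in>B. card (row b))"
    unfolding U_def by (rule card_UN_disjoint) (use finB disj in \<open>auto simp: rowdef finR\<close>)
  also have "\<dots> = card B * k" using rowk by simp
  finally have "card U = card {1..<int m}" using cardB by simp
  hence Ueq: "U = {1..<int m}" using Usub by (intro card_subset_eq) auto
  define S where "S = {x \<in> R. \<not> int p dvd x}"
  define B' where "B' = {b \<in> B. \<not> int p dvd b}"
  define T where "T = {y \<in> {0..<int m}. \<not> int p dvd y}"
  define f where "f = (\<lambda>(x, b). (x*b) mod int m)"
  have pm: "int p dvd int m" using assms(8) by simp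
  have pr: "prime (int p)" using assms(6) by simp
  have bij: "bij_betw f (S \<times> B') T"
  proof (rule bij_betwI')
    fix u v assume u: "u \<in> S \<times> B'" and v: "v \<in> S \<times> B'"
    obtain x b where xb: "u = (x, b)" by (cases u)
    obtain x' b' where xb': "v = (x', b')" by (cases v)
    have hx: "x \<in> R" "b \<in> B" "x' \<in> R" "b' \<in> B" using u v xb xb' unfolding S_def B'_def by auto
    show "(f u = f v) = (u = v)"
    proof
      assume e: "f u = f v"
      have "b = b'"
      proof (rule ccontr)
        assume "b \<noteq> b'"
        moreover have "f u \<in> row b" "f v \<in> row b'" using hx xb xb' unfolding f_def rowdef by auto
        ultimately show False using disj[OF hx(2,4)] e by auto
      qed
      moreover have "x = x'"
      proof -
        have "(x*b) mod int m = (x'*b) mod int m" using e \<open>b = b'\<close> xb xb' unfolding f_def by simp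
        thus ?thesis using inj_onD[OF inj[OF hx(2)] _ hx(1) hx(3)] by simp
      qed
      ultimately show "u = v" using xb xb' by simp
    qed simp
  next
    fix u assume u: "u \<in> S \<times> B'"
    obtain x b where xb: "u = (x, b)" by (cases u)
    have nx: "\<not> int p dvd x" and nb: "\<not> int p dvd b" using u xb unfolding S_def B'_def by auto
    have "\<not> int p dvd x * b" using nx nb pr by (simp add: prime_dvd_mult_iff)
    hence "\<not> int p dvd (x*b) mod int m" using pm by (simp add: dvd_mod_iff)
    thus "f u \<in> T" using xb assms(4) unfolding f_def T_def by auto
  next
    fix y assume y: "y \<in> T"
    have "y \<noteq> 0" using y unfolding T_def by auto
    hence "y \<in> U" using y Ueq unfolding T_def by auto
    then obtain b x where b: "b \<in> B" "x \<in> R" "y = (x*b) mod int m" unfolding U_def rowdef by auto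
    have "\<not> int p dvd x * b" using y b pm unfolding T_def by (auto simp: dvd_mod_iff)
    hence "\<not> int p dvd x" "\<not> int p dvd b" by auto
    thus "\<exists>u\<in>S \<times> B'. y = f u" using b unfolding S_def B'_def f_def by auto
  qed
  obtain n where n: "m = p * n" using assms(8) by (auto elim: dvdE)
  have "card (S \<times> B') = card T" by (rule bij_betw_same_card[OF bij])
  hence "card S * card B' = card T" by (simp only: card_cartesian_product)
  also have "card T = m - n" using card_T[OF p0 n] unfolding T_def .
  finally have "card S * card B' = m - n" .
  moreover have "card S = k - k div p"
  proof -
    have "card S = (k1 - k1 div p) + (k2 - k2 div p)"
      using card_S[OF p0, of k1 k2] unfolding S_def R_def .
    moreover have "k1 div p \<le> k1" "k2 div p \<le> k2" by (rule div_le_dividend)+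
    ultimately show ?thesis using assms(11) unfolding k_def by linarith
  qed
  moreover have "m - n = n * (p - 1)" using n by (simp add: diff_mult_distrib2 mult.commute)
  ultimately have eq1: "(k - k div p) * card B' = n * (p - 1)" by simp
  obtain t where t: "a * k + 1 = p * t" using assms(10) unfolding k_def by (auto elim: dvdE)
  have key: "a * (k - k div p) = t * (p - 1)" using arith_key[OF t assms(9,6,7)] .
  have "t * (p - 1) * card B' = a * (k - k div p) * card B'" using key by simp
  also have "\<dots> = a * ((k - k div p) * card B')" by (simp only: mult.assoc)
  also have "\<dots> = a * n * (p - 1)" using eq1 by simp
  finally have "t * (p - 1) * card B' = a * n * (p - 1)" .
  note calc = this
  have pos: "p - 1 > 0" using prime_gt_1_nat[OF assms(6)] by simp
  have gen: "\<And>q c. t * q * c = a * n * q \<Longrightarrow> q > 0 \<Longrightarrow> t * c = a * n"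
  proof -
    fix q c :: nat assume h: "t * q * c = a * n * q" "q > 0"
    have "(t * c) * q = (a * n) * q" using h(1) by (simp only: mult.assoc mult.commute[of q c])
    thus "t * c = a * n" using h(2) by simp
  qed
  have "t * card B' = a * n" by (rule gen[OF calc pos])
  hence "t dvd a * n" using dvd_triv_left[of t "card B'"] by simp
  moreover have "coprime t a"
  proof -
    have "a * k + 1 = p * t" by (fact t)
    moreover have "coprime (a * k + 1) a"
    proof (rule coprimeI)
      fix d assume "d dvd a * k + 1" "d dvd a"
      hence "d dvd a * k" by simp
      from dvd_diff_nat[OF \<open>d dvd a * k + 1\<close> this] show "d dvd 1" by simp
    qed
    ultimately have "coprime (p * t) a" by simp
    thus ?thesis by simp
  qed
  ultimately have "t dvd n" by (simp add: coprime_dvd_mult_right_iff)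
  hence "p * t dvd p * n" by simp
  thus ?thesis using t n unfolding k_def by simp
qed

end
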